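(* Assume the setting described in the context (quadratic nonlinearity with exponentially decaying semigroup estimators and forcing). Let $f_0\in F$, put $F_0:=\|f_0\|+NJ$, and assume $4KNF_0\le1$. Then VP$(f_0)$ has a global solution $\varphi:[0,+\infty)\to F$ and, for all $t\ge0$, $\|\varphi(t)\|\le F_0\,\mathcal X(4KNF_0)\,e^{-Bt}$, where $\mathcal X(z):=(1-\sqrt{1-z})/(z/2)$ for $z\in(0,1]$ and $\mathcal X(0):=1$.
   Context: Banach spaces over a common field. $X\hookrightarrow Y$ means $X$ is a dense subspace of $Y$ with continuous inclusion. Setting: $F_+,F,F_-$ Banach spaces with norms $\|\cdot\|_+,\|\cdot\|,\|\cdot\|_-$, $F_+\hookrightarrow F\hookrightarrow F_-$; $\mathcal A:F_+\to F_-$ linear with $\|\cdot\|_+$ equivalent on $F_+$ to $\|f\|_-+\|\mathcal Af\|_-$; $\mathcal A$ generates a strongly continuous semigroup $(e^{t\mathcal A})_{t\ge0}$ on $F_-$ (domain $F_+$); $e^{t\mathcal A}(F)\subset F$ ($t\ge0$) with $(f,t)\mapsto e^{t\mathcal A}f$ continuous $F\times[0,\infty)\to F$; $e^{t\mathcal A}(F_-)\subset F$ ($t>0$) with $(f,t)\mapsto e^{t\mathcal A}f$ continuous $F_-\times(0,\infty)\to F$. There are constants $B\ge0$, $N>0$ with $\|e^{t\mathcal A}f\|\le e^{-Bt}\|f\|$ ($t\ge0$, $f\in F$) and $\|e^{t\mathcal A}f\|\le\mu_-(t)e^{-Bt}\|f\|_-$ ($t>0$, $f\in F_-$), where $\mu_-\in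 C((0,\infty),(0,\infty))$, $\mu_-(t)=O(t^{-(1-\sigma)})$ as $t\to0^+$ for some $\sigma\in(0,1]$, and $\int_0^t\mu_-(t-s)e^{-Bs}ds\le N$ for all $t\ge0$. $\mathscr P:F\times F\to F_-$ bilinear with $\|\mathscr P(f,g)\|_-\le K\|f\|\|g\|$, $K\in(0,\infty)$; $\xi:[0,+\infty)\to F_-$ locally Lipschitz with $\|\xi(t)\|_-\le Je^{-2Bt}$ for all $t\ge0$, for a constant $J\ge0$; $\mathcal P(f,t):=\mathscr P(f,f)+\xi(t)$. VP$(f_0)$ asks for $\varphi\in C([0,T),F)$ with $\varphi(t)=e^{t\mathcal A}f_0+\int_0^te^{(t-s)\mathcal A}\mathcal P(\varphi(s),s)\,ds$ for $t\in[0,T)$. *)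

theory Defs
  imports "HOL-Analysis.Analysis" "HOL-Library.Landau_Symbols"
begin

definition strongly_continuous_semigroup :: "(real \<Rightarrow> 'a::real_normed_vector \<Rightarrow> 'a) \<Rightarrow> bool" where
  "strongly_continuous_semigroup S \<longleftrightarrow>
     (\<forall>t\<ge>0. bounded_linear (S t)) \<and> S 0 = id \<and>
     (\<forall>t s. t \<ge> 0 \<longrightarrow> s \<ge> 0 \<longrightarrow> S (t + s) = S t \<circ> S s) \<and>
     (\<forall>x. continuous_on {0..} (\<lambda>t. S t x))"

text \<open>The operator A, defined on the space embedded via j, generates the semigroup S,
  with domain exactly the range of j.\<close>
definition generates :: "('p \<Rightarrow> 'm::real_normed_vector) \<Rightarrow> ('p \<Rightarrow> 'm) \<Rightarrow> (real \<Rightarrow> 'm \<Rightarrow> 'm) \<Rightarrow> bool" where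
  "generates j A S \<longleftrightarrow> strongly_continuous_semigroup S \<and>
     {x. \<exists>y. ((\<lambda>h. (1 / h) *\<^sub>R (S h x - x)) \<longlongrightarrow> y) (at_right 0)} = range j \<and>
     (\<forall>p. ((\<lambda>h. (1 / h) *\<^sub>R (S h (j p) - j p)) \<longlongrightarrow> A p) (at_right 0))"

definition dense_embedding :: "('a::real_normed_vector \<Rightarrow> 'b::real_normed_vector) \<Rightarrow> bool" where
  "dense_embedding i \<longleftrightarrow> bounded_linear i \<and> inj i \<and> closure (range i) = UNIV"

definition chiX :: "real \<Rightarrow> real" where
  "chiX z = (if z = 0 then 1 else (1 - sqrt (1 - z)) / (z / 2))"

end

theory Submission
  imports Defs
begin

lemma powr_int:
  fixes a t \<sigma> :: real
  assumes "0 < \<sigma>" "a \<le> t"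
  shows "((\<lambda>s. (t - s) powr (\<sigma> - 1)) has_integral ((t - a) powr \<sigma> / \<sigma>)) {a..t}"
proof -
  have "((\<lambda>s. (t - s) powr (\<sigma> - 1)) has_integral ((\<lambda>s. - ((t - s) powr \<sigma> / \<sigma>)) t - (\<lambda>s. - ((t - s) powr \<sigma> / \<sigma>)) a)) {a..t}"
  proof (rule fundamental_theorem_of_calculus_interior)
    show "a \<le> t" by fact
    show "continuous_on {a..t} (\<lambda>s. - ((t - s) powr \<sigma> / \<sigma>))"
      using assms by (intro continuous_intros continuous_on_powr') auto
    show "((\<lambda>s. - ((t - s) powr \<sigma> / \<sigma>)) has_vector_derivative (t - x) powr (\<sigma> - 1)) (at x)"
      if "x \<in> {a<..<t}" for x
      using that assms unfolding has_real_derivative_iff_has_vector_derivative[symmetric]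
      by (auto intro!: derivative_eq_intros simp: field_simps)
  qed
  then show ?thesis using assms by simp
qed

lemma riemann_diff_bound:
  fixes f g :: "real \<Rightarrow> 'b::real_normed_vector"
  assumes D: "D tagged_division_of {a..b}"
    and le: "\<And>x. x \<in> {a..b} \<Longrightarrow> norm (f x - g x) \<le> h x"
  shows "norm ((\<Sum>(x,K)\<in>D. Henstock_Kurzweil_Integration.content K *\<^sub>R f x) - (\<Sum>(x,K)\<in>D. Henstock_Kurzweil_Integration.content K *\<^sub>R g x))
         \<le> (\<Sum>(x,K)\<in>D. Henstock_Kurzweil_Integration.content K *\<^sub>R h x)"
proof -
  have "(\<Sum>(x,K)\<in>D. Henstock_Kurzweil_Integration.content K *\<^sub>R f x) - (\<Sum>(x,K)\<in>D. Henstock_Kurzweil_Integration.content K *\<^sub>R g x)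
        = (\<Sum>(x,K)\<in>D. Henstock_Kurzweil_Integration.content K *\<^sub>R (f x - g x))"
    by (simp add: sum_subtractf[symmetric] split_def scaleR_diff_right)
  also have "norm \<dots> \<le> (\<Sum>(x,K)\<in>D. norm (Henstock_Kurzweil_Integration.content K *\<^sub>R (f x - g x)))"
    by (simp add: split_def sum_norm_le)
  also have "\<dots> \<le> (\<Sum>(x,K)\<in>D. Henstock_Kurzweil_Integration.content K *\<^sub>R h x)"
  proof (rule sum_mono, clarify)
    fix x K assume "(x,K) \<in> D"
    then have "x \<in> {a..b}" using tagged_division_ofD(2,3)[OF D] by blast
    then show "norm (Henstock_Kurzweil_Integration.content K *\<^sub>R (f x - g x)) \<le> Henstock_Kurzweil_Integration.content K *\<^sub>R h x"
      using le by (simp add: mult_left_mono)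
  qed
  finally show ?thesis .
qed

lemma tri3:
  fixes a b c d :: "'b::real_normed_vector"
  shows "norm (a - b) \<le> norm (a - c) + norm (c - d) + norm (b - d)"
proof -
  have "a - b = (a - c) + (c - d) - (b - d)" by simp
  then show ?thesis by (metis norm_triangle_ineq4 norm_triangle_ineq order_trans add_right_mono)
qed

lemma dom_integrable:
  fixes f :: "real \<Rightarrow> 'b::banach"
  assumes H: "\<And>e. e > 0 \<Longrightarrow> \<exists>g h. g integrable_on {a..b} \<and> h integrable_on {a..b} \<and>
                 (\<forall>x\<in>{a..b}. norm (f x - g x) \<le> h x) \<and> integral {a..b} h < e"
  shows "f integrable_on {a..b}"
proof -
  have "\<exists>\<gamma>. gauge \<gamma> \<and>
          (\<forall>\<D>1 \<D>2. \<D>1 tagged_division_of (cbox a b) \<and> \<gamma> fine \<D>1 \<and>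
            \<D>2 tagged_division_of (cbox a b) \<and> \<gamma> fine \<D>2 \<longrightarrow>
            norm ((\<Sum>(x,K)\<in>\<D>1. Henstock_Kurzweil_Integration.content K *\<^sub>R f x) - (\<Sum>(x,K)\<in>\<D>2. Henstock_Kurzweil_Integration.content K *\<^sub>R f x)) < e)"
    if e: "e > 0" for e
  proof -
    obtain g h where g: "g integrable_on {a..b}" and h: "h integrable_on {a..b}"
      and le: "\<forall>x\<in>{a..b}. norm (f x - g x) \<le> h x" and hi: "integral {a..b} h < e/8"
      using H[of "e/8"] e by auto
    from g[unfolded box_real(2)[symmetric] integrable_Cauchy] e
    obtain \<gamma>1 where \<gamma>1: "gauge \<gamma>1" and c1: "\<And>\<D>1 \<D>2. \<D>1 tagged_division_of (cbox a b) \<Longrightarrow> \<gamma>1 fine \<D>1 \<Longrightarrow>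
            \<D>2 tagged_division_of (cbox a b) \<Longrightarrow> \<gamma>1 fine \<D>2 \<Longrightarrow>
            norm ((\<Sum>(x,K)\<in>\<D>1. Henstock_Kurzweil_Integration.content K *\<^sub>R g x) - (\<Sum>(x,K)\<in>\<D>2. Henstock_Kurzweil_Integration.content K *\<^sub>R g x)) < e/4"
      by (metis (no_types, lifting) divide_pos_pos zero_less_numeral)
    from h have "(h has_integral integral {a..b} h) {a..b}" by (rule integrable_integral)
    from this[unfolded has_integral_real, rule_format, of "e/8"] e
    obtain \<gamma>2 where \<gamma>2: "gauge \<gamma>2" and c2: "\<And>\<D>. \<D> tagged_division_of {a..b} \<Longrightarrow> \<gamma>2 fine \<D> \<Longrightarrow>
        norm ((\<Sum>(x,K)\<in>\<D>. Henstock_Kurzweil_Integration.content K *\<^sub>R h x) - integral {a..b} h) < e/8"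
      by auto
    have hb: "(\<Sum>(x,K)\<in>\<D>. Henstock_Kurzweil_Integration.content K *\<^sub>R h x) < e/4" if "\<D> tagged_division_of {a..b}" "\<gamma>2 fine \<D>" for \<D>
      using c2[OF that] hi unfolding split_def real_norm_def by arith
    show ?thesis
    proof (intro exI conjI allI impI)
      show "gauge (\<lambda>x. \<gamma>1 x \<inter> \<gamma>2 x)" using \<gamma>1 \<gamma>2 by auto
      fix \<D>1 \<D>2
      assume A: "\<D>1 tagged_division_of cbox a b \<and> (\<lambda>x. \<gamma>1 x \<inter> \<gamma>2 x) fine \<D>1 \<and>
            \<D>2 tagged_division_of cbox a b \<and> (\<lambda>x. \<gamma>1 x \<inter> \<gamma>2 x) fine \<D>2"
      then have D1: "\<D>1 tagged_division_of {a..b}" and D2: "\<D>2 tagged_division_of {a..b}"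
        and f1: "\<gamma>1 fine \<D>1" "\<gamma>2 fine \<D>1" and f2: "\<gamma>1 fine \<D>2" "\<gamma>2 fine \<D>2"
        by (auto simp: fine_Int)
      have n1: "norm ((\<Sum>(x,K)\<in>\<D>1. Henstock_Kurzweil_Integration.content K *\<^sub>R f x) - (\<Sum>(x,K)\<in>\<D>1. Henstock_Kurzweil_Integration.content K *\<^sub>R g x)) < e/4"
        using riemann_diff_bound[OF D1, of f g h] le hb[OF D1 f1(2)] by force
      have n2: "norm ((\<Sum>(x,K)\<in>\<D>2. Henstock_Kurzweil_Integration.content K *\<^sub>R f x) - (\<Sum>(x,K)\<in>\<D>2. Henstock_Kurzweil_Integration.content K *\<^sub>R g x)) < e/4"
        using riemann_diff_bound[OF D2, of f g h] le hb[OF D2 f2(2)] by force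
      have n3: "norm ((\<Sum>(x,K)\<in>\<D>1. Henstock_Kurzweil_Integration.content K *\<^sub>R g x) - (\<Sum>(x,K)\<in>\<D>2. Henstock_Kurzweil_Integration.content K *\<^sub>R g x)) < e/4"
        using c1 A f1 f2 by auto
      show "norm ((\<Sum>(x,K)\<in>\<D>1. Henstock_Kurzweil_Integration.content K *\<^sub>R f x) - (\<Sum>(x,K)\<in>\<D>2. Henstock_Kurzweil_Integration.content K *\<^sub>R f x)) < e"
        using tri3[of "\<Sum>(x,K)\<in>\<D>1. Henstock_Kurzweil_Integration.content K *\<^sub>R f x" "\<Sum>(x,K)\<in>\<D>2. Henstock_Kurzweil_Integration.content K *\<^sub>R f x"
          "\<Sum>(x,K)\<in>\<D>1. Henstock_Kurzweil_Integration.content K *\<^sub>R g x" "\<Sum>(x,K)\<in>\<D>2. Henstock_Kurzweil_Integration.content K *\<^sub>R g x"] n1 n2 n3 e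
        by linarith
    qed
  qed
  then show ?thesis
    unfolding box_real(2)[symmetric] integrable_Cauchy by blast
qed


lemma norm_int_bound_spike:
  fixes V :: "real \<Rightarrow> 'b::banach"
  assumes V: "V integrable_on {a..t}" and h: "h integrable_on {a..t}"
    and le: "\<And>s. a \<le> s \<Longrightarrow> s < t \<Longrightarrow> norm (V s) \<le> h s"
  shows "norm (integral {a..t} V) \<le> integral {a..t} h"
proof -
  define V' where "V' s = (if s = t then 0 else V s)" for s
  define h' where "h' s = (if s = t then 0 else h s)" for s
  have eV: "integral {a..t} V' = integral {a..t} V"
    by (rule integral_spike[of "{t}"]) (auto simp: V'_def)
  have eh: "integral {a..t} h' = integral {a..t} h"
    by (rule integral_spike[of "{t}"]) (auto simp: h'_def)
  have iV: "V' integrable_on {a..t}"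
    by (rule integrable_spike[OF V, of "{t}"]) (auto simp: V'_def)
  have ih: "h' integrable_on {a..t}"
    by (rule integrable_spike[OF h, of "{t}"]) (auto simp: h'_def)
  have "norm (integral {a..t} V') \<le> integral {a..t} h'"
    by (rule integral_norm_bound_integral[OF iV ih]) (auto simp: V'_def h'_def intro: le)
  then show ?thesis using eV eh by simp
qed

lemma tail_bound:
  fixes V :: "real \<Rightarrow> 'b::banach"
  assumes "a \<le> t" "0 < \<sigma>" and V: "V integrable_on {a..t}"
    and le: "\<And>s. a \<le> s \<Longrightarrow> s < t \<Longrightarrow> norm (V s) \<le> M * (t - s) powr (\<sigma> - 1)"
  shows "norm (integral {a..t} V) \<le> M * ((t - a) powr \<sigma> / \<sigma>)"
proof -
  have hi: "((\<lambda>s. M * (t - s) powr (\<sigma> - 1)) has_integral M * ((t - a) powr \<sigma> / \<sigma>)) {a..t}"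
    using has_integral_mult_right[OF powr_int[OF assms(2,1)]] by simp
  show ?thesis
    using norm_int_bound_spike[OF V has_integral_integrable[OF hi] le] integral_unique[OF hi] by simp
qed

lemma small_delta:
  fixes e M \<sigma> r :: real
  assumes "e > 0" "M \<ge> 0" "\<sigma> > 0" "r > 0"
  obtains \<delta> where "0 < \<delta>" "\<delta> \<le> r" "M * (\<delta> powr \<sigma> / \<sigma>) < e"
proof -
  define c where "c = e * \<sigma> / (2 * (M + 1))"
  have c: "c > 0" using assms by (simp add: c_def)
  define \<delta> where "\<delta> = min r (c powr (1 / \<sigma>))"
  have d: "0 < \<delta>" "\<delta> \<le> r" using assms c by (auto simp: \<delta>_def)
  have "\<delta> powr \<sigma> \<le> (c powr (1 / \<sigma>)) powr \<sigma>"
    using d assms by (intro powr_mono2) (auto simp: \<delta>_def)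
  also have "\<dots> = c" using c assms by (simp add: powr_powr)
  finally have dc: "\<delta> powr \<sigma> \<le> c" .
  have cs: "c / \<sigma> = e / (2 * (M + 1))" using assms by (simp add: c_def)
  have 1: "M * (\<delta> powr \<sigma> / \<sigma>) \<le> M * (e / (2 * (M + 1)))"
    using assms dc cs by (metis divide_right_mono less_le mult_left_mono)
  have "e * M < e * (2 * (M + 1))" using assms by (intro mult_strict_left_mono) auto
  then have 2: "M * (e / (2 * (M + 1))) < e" using assms by (simp add: divide_less_eq mult.commute)
  show ?thesis using d 1 2 by (intro that) auto
qed

lemma sing_integrable:
  fixes V :: "real \<Rightarrow> 'b::banach"
  assumes t: "t \<ge> 0" and cont: "continuous_on {0..<t} V" and \<sigma>: "\<sigma> > 0" and r0: "r0 > 0"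
    and M: "M \<ge> 0"
    and le: "\<And>s. 0 \<le> s \<Longrightarrow> s < t \<Longrightarrow> t - s \<le> r0 \<Longrightarrow> norm (V s) \<le> M * (t - s) powr (\<sigma> - 1)"
  shows "V integrable_on {0..t}"
proof (cases "t = 0")
  case True
  then show ?thesis by (metis box_real(2) integrable_on_refl)
next
  case False
  with t have t: "t > 0" by simp
  show ?thesis
  proof (rule dom_integrable)
    fix e :: real assume e: "e > 0"
    obtain \<delta> where d: "0 < \<delta>" "\<delta> \<le> min r0 t" and small: "M * (\<delta> powr \<sigma> / \<sigma>) < e"
      using small_delta[OF e M \<sigma>, of "min r0 t"] r0 t by auto
    define g where "g s = (if s \<in> {0..t-\<delta>} \<union> {t} then V s else 0)" for s
    define g0 where "g0 s = (if s \<in> {0..t-\<delta>} then V s else 0)" for s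
    define h where "h s = (if s \<in> {t-\<delta>..t} then M * (t - s) powr (\<sigma> - 1) else 0)" for s
    have "V integrable_on {0..t-\<delta>}"
      by (rule integrable_continuous_interval) (rule continuous_on_subset[OF cont], use d in auto)
    then have "g0 integrable_on {0..t}"
      unfolding g0_def integrable_restrict_Int using d by (simp add: Int_absorb2 subset_iff)
    then have gi: "g integrable_on {0..t}"
      by (rule integrable_spike[of _ _ "{t}"]) (auto simp: g_def g0_def)
    have hi0: "((\<lambda>s. M * (t - s) powr (\<sigma> - 1)) has_integral M * ((t - (t - \<delta>)) powr \<sigma> / \<sigma>)) {t-\<delta>..t}"
      using has_integral_mult_right[OF powr_int[OF \<sigma>, of "t - \<delta>" t]] d by simp
    have sub: "{t-\<delta>..t} \<inter> {0..t} = {t-\<delta>..t}" using d by auto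
    have hi: "(h has_integral M * (\<delta> powr \<sigma> / \<sigma>)) {0..t}"
      unfolding h_def has_integral_restrict_Int sub using hi0 by simp
    show "\<exists>g h. g integrable_on {0..t} \<and> h integrable_on {0..t} \<and>
            (\<forall>x\<in>{0..t}. norm (V x - g x) \<le> h x) \<and> integral {0..t} h < e"
    proof (intro exI conjI ballI)
      show "g integrable_on {0..t}" by (fact gi)
      show "h integrable_on {0..t}" using hi by blast
      show "integral {0..t} h < e" using integral_unique[OF hi] small by simp
      fix x assume x: "x \<in> {0..t}"
      have hnn: "h x \<ge> 0" using M by (simp add: h_def)
      show "norm (V x - g x) \<le> h x"
      proof (cases "x \<le> t - \<delta> \<or> x = t")
        case True then show ?thesis using x hnn by (auto simp: g_def)
      next
        case False
        then have "g x = 0" "h x = M * (t - x) powr (\<sigma> - 1)" using x by (auto simp: g_def h_def)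
        moreover have "norm (V x) \<le> M * (t - x) powr (\<sigma> - 1)"
          using False x d by (intro le) auto
        ultimately show ?thesis by simp
      qed
    qed
  qed
qed


lemma V_cont:
  fixes TM :: "real \<Rightarrow> 'm::real_normed_vector \<Rightarrow> 'f::real_normed_vector" and G :: "real \<Rightarrow> 'm"
  assumes TMc: "continuous_on (UNIV \<times> {0<..}) (\<lambda>(g, t). TM t g)"
    and Gc: "continuous_on S G" and S: "\<And>s. s \<in> S \<Longrightarrow> s < t"
  shows "continuous_on S (\<lambda>s. TM (t - s) (G s))"
proof -
  have "continuous_on S ((\<lambda>(g, t). TM t g) \<circ> (\<lambda>s. (G s, t - s)))"
  proof (rule continuous_on_compose)
    show "continuous_on S (\<lambda>s. (G s, t - s))" by (intro continuous_intros Gc)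
    show "continuous_on ((\<lambda>s. (G s, t - s)) ` S) (\<lambda>(g, t). TM t g)"
      by (rule continuous_on_subset[OF TMc]) (auto dest: S)
  qed
  then show ?thesis by (simp add: o_def)
qed

lemma conv_integrable:
  fixes TM :: "real \<Rightarrow> 'm::real_normed_vector \<Rightarrow> 'f::banach" and G :: "real \<Rightarrow> 'm"
  assumes TMc: "continuous_on (UNIV \<times> {0<..}) (\<lambda>(g, t). TM t g)"
    and TMb: "\<And>r g. 0 < r \<Longrightarrow> r \<le> r0 \<Longrightarrow> norm (TM r g) \<le> M * r powr (\<sigma> - 1) * norm g"
    and \<sigma>: "\<sigma> > 0" and r0: "r0 > 0" and M: "M \<ge> 0" and t: "t \<ge> 0"
    and Gc: "continuous_on {0..t} G" and Gb: "\<And>s. s \<in> {0..t} \<Longrightarrow> norm (G s) \<le> c"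
  shows "(\<lambda>s. TM (t - s) (G s)) integrable_on {0..t}"
    and "\<And>s. 0 \<le> s \<Longrightarrow> s < t \<Longrightarrow> t - s \<le> r0 \<Longrightarrow> norm (TM (t - s) (G s)) \<le> (M * c) * (t - s) powr (\<sigma> - 1)"
proof -
  show b: "norm (TM (t - s) (G s)) \<le> (M * c) * (t - s) powr (\<sigma> - 1)"
    if "0 \<le> s" "s < t" "t - s \<le> r0" for s
  proof -
    have "norm (TM (t - s) (G s)) \<le> M * (t - s) powr (\<sigma> - 1) * norm (G s)"
      using that by (intro TMb) auto
    also have "\<dots> \<le> M * (t - s) powr (\<sigma> - 1) * c"
      using that M by (intro mult_left_mono Gb) auto
    finally show ?thesis by (simp add: mult_ac)
  qed
  have "(0::real) \<in> {0..t}" using t by simp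
  then have "norm (G 0) \<le> c" by (rule Gb)
  then have "c \<ge> 0" by (metis norm_ge_zero order_trans)
  show "(\<lambda>s. TM (t - s) (G s)) integrable_on {0..t}"
  proof (rule sing_integrable[OF t _ \<sigma> r0])
    show "continuous_on {0..<t} (\<lambda>s. TM (t - s) (G s))"
      by (rule V_cont[OF TMc]) (auto intro: continuous_on_subset[OF Gc])
    show "0 \<le> M * c" using M \<open>c \<ge> 0\<close> by simp
  qed (use b in auto)
qed



lemma tri_sum:
  fixes A A' B B' :: "'b::real_normed_vector"
  shows "norm ((A + B) - (A' + B')) \<le> norm (A - A') + norm B + norm B'"
proof -
  have "(A + B) - (A' + B') = (A - A') + B - B'" by simp
  then show ?thesis by (metis norm_triangle_ineq4 norm_triangle_ineq order_trans add_right_mono)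
qed

lemma conv_cont:
  fixes TM :: "real \<Rightarrow> 'm::real_normed_vector \<Rightarrow> 'f::banach" and G :: "real \<Rightarrow> 'm"
  assumes TMc: "continuous_on (UNIV \<times> {0<..}) (\<lambda>(g, t). TM t g)"
    and TMb: "\<And>r g. 0 < r \<Longrightarrow> r \<le> r0 \<Longrightarrow> norm (TM r g) \<le> M * r powr (\<sigma> - 1) * norm g"
    and \<sigma>: "\<sigma> > 0" and r0: "r0 > 0" and M: "M \<ge> 0" and T: "T \<ge> 0"
    and Gc: "continuous_on {0..T} G" and Gb: "\<And>s. s \<in> {0..T} \<Longrightarrow> norm (G s) \<le> c"
  shows "continuous_on {0..T} (\<lambda>t. integral {0..t} (\<lambda>s. TM (t - s) (G s)))"
proof -
  have c: "c \<ge> 0"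
  proof -
    have "(0::real) \<in> {0..T}" using T by simp
    then have "norm (G 0) \<le> c" by (rule Gb)
    then show "c \<ge> 0" by (metis norm_ge_zero order_trans)
  qed
  define K0 where "K0 = M * c"
  have K0: "K0 \<ge> 0" using M c by (simp add: K0_def)
  define C where "C t = integral {0..t} (\<lambda>s. TM (t - s) (G s))" for t
  have int: "(\<lambda>s. TM (t - s) (G s)) integrable_on {0..t}"
    and bnd: "\<And>s. 0 \<le> s \<Longrightarrow> s < t \<Longrightarrow> t - s \<le> r0 \<Longrightarrow> norm (TM (t - s) (G s)) \<le> K0 * (t - s) powr (\<sigma> - 1)"
    if "t \<in> {0..T}" for t
    using conv_integrable[OF TMc TMb \<sigma> r0 M, of t G c] that
      continuous_on_subset[OF Gc, of "{0..t}"] Gb by (auto simp: K0_def)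
  have tail: "norm (integral {a..t} (\<lambda>s. TM (t - s) (G s))) \<le> K0 * ((t - a) powr \<sigma> / \<sigma>)"
    if "t \<in> {0..T}" "0 \<le> a" "a \<le> t" "t - a \<le> r0" for a t
  proof (rule tail_bound[OF that(3) \<sigma>])
    show "(\<lambda>s. TM (t - s) (G s)) integrable_on {a..t}"
      by (rule integrable_subinterval_real[OF int[OF that(1)]]) (use that in auto)
    show "norm (TM (t - s) (G s)) \<le> K0 * (t - s) powr (\<sigma> - 1)" if "a \<le> s" "s < t" for s
      using bnd[of t s] that \<open>t \<in> {0..T}\<close> \<open>0 \<le> a\<close> \<open>t - a \<le> r0\<close> by auto
  qed
  show ?thesis
    unfolding C_def[symmetric] continuous_on_iff
  proof (intro ballI allI impI)
    fix t0 e :: real assume t0: "t0 \<in> {0..T}" and e: "e > 0"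
    show "\<exists>d>0. \<forall>t\<in>{0..T}. dist t t0 < d \<longrightarrow> dist (C t) (C t0) < e"
    proof (cases "t0 = 0")
      case True
      obtain \<delta> where d: "0 < \<delta>" "\<delta> \<le> r0" and sm: "K0 * (\<delta> powr \<sigma> / \<sigma>) < e"
        using small_delta[OF e K0 \<sigma> r0] by blast
      show ?thesis
      proof (intro exI conjI ballI impI)
        show "\<delta> > 0" by fact
        fix t assume t: "t \<in> {0..T}" and dt: "dist t t0 < \<delta>"
        then have tl: "t < \<delta>" using True by (simp add: dist_real_def)
        have C0: "C t0 = 0" using True by (simp add: C_def)
        have "norm (C t) \<le> K0 * ((t - 0) powr \<sigma> / \<sigma>)"
          unfolding C_def using t tl d by (intro tail) auto
        also have "\<dots> \<le> K0 * (\<delta> powr \<sigma> / \<sigma>)"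
          using t tl \<sigma> K0 by (intro mult_left_mono divide_right_mono powr_mono2) auto
        finally show "dist (C t) (C t0) < e" using C0 sm by (simp add: dist_norm)
      qed
    next
      case False
      then have t0p: "t0 > 0" using t0 by simp
      obtain \<delta>' where d': "0 < \<delta>'" "\<delta>' \<le> min t0 r0" and sm: "K0 * (\<delta>' powr \<sigma> / \<sigma>) < e / 3"
        using small_delta[OF _ K0 \<sigma>, of "e/3" "min t0 r0"] e r0 t0p by auto
      define \<delta> where "\<delta> = \<delta>' / 2"
      define a where "a = t0 - \<delta>"
      have d: "0 < \<delta>" "a \<ge> 0" "a < t0" using d' by (auto simp: \<delta>_def a_def)
      define KS where "KS = {0..a} \<times> {t0 - \<delta>/2 .. t0 + \<delta>/2}"
      define F where "F = (\<lambda>(s, t). TM (t - s) (G s))"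
      have "continuous_on KS ((\<lambda>(g, t). TM t g) \<circ> (\<lambda>(s, t). (G s, t - s)))"
      proof (rule continuous_on_compose)
        have "continuous_on KS (\<lambda>x. (G (fst x), snd x - fst x))"
        proof (intro continuous_intros)
          show "continuous_on KS (\<lambda>x. G (fst x))"
            by (rule continuous_on_compose2[OF Gc]) (auto intro: continuous_intros simp: KS_def a_def
                   dest: order_trans[OF _ less_imp_le[OF \<open>a < t0\<close>[unfolded a_def]]] | use t0 in auto)+
        qed
        then show "continuous_on KS (\<lambda>(s, t). (G s, t - s))" by (simp add: case_prod_unfold)
        show "continuous_on ((\<lambda>(s, t). (G s, t - s)) ` KS) (\<lambda>(g, t). TM t g)"
          by (rule continuous_on_subset[OF TMc]) (use d' in \<open>auto simp: KS_def a_def \<delta>_def\<close>)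
      qed
      then have "continuous_on KS F" by (simp add: F_def o_def case_prod_unfold)
      moreover have "compact KS" unfolding KS_def by (intro compact_Times compact_Icc)
      ultimately have uc: "uniformly_continuous_on KS F" by (rule compact_uniformly_continuous)
      have e3: "e / (3 * (a + 1)) > 0" using e d by simp
      obtain d1 where d1: "d1 > 0" and d1': "\<And>x x'. x \<in> KS \<Longrightarrow> x' \<in> KS \<Longrightarrow> dist x' x < d1 \<Longrightarrow>
          dist (F x') (F x) < e / (3 * (a + 1))"
        using uc[unfolded uniformly_continuous_on_def, rule_format, OF e3] by metis
      show ?thesis
      proof (intro exI conjI ballI impI)
        show "min d1 (\<delta>/2) > 0" using d1 d by simp
        fix t assume t: "t \<in> {0..T}" and dt: "dist t t0 < min d1 (\<delta>/2)"
        have tt: "\<bar>t - t0\<bar> < d1" "t - t0 < \<delta>/2" "t0 - t < \<delta>/2"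
          using dt unfolding dist_real_def min_less_iff_conj by arith+
        have at: "a \<le> t" unfolding a_def using tt(3) d(1) by linarith
        have sp1: "C t = integral {0..a} (\<lambda>s. TM (t - s) (G s)) + integral {a..t} (\<lambda>s. TM (t - s) (G s))"
          unfolding C_def using Henstock_Kurzweil_Integration.integral_combine[OF d(2) at int[OF t]] by simp
        have sp2: "C t0 = integral {0..a} (\<lambda>s. TM (t0 - s) (G s)) + integral {a..t0} (\<lambda>s. TM (t0 - s) (G s))"
          unfolding C_def using Henstock_Kurzweil_Integration.integral_combine[OF d(2) _ int[OF t0]] d by simp
        have n1: "norm (integral {a..t} (\<lambda>s. TM (t - s) (G s))) < e / 3"
        proof -
          have "norm (integral {a..t} (\<lambda>s. TM (t - s) (G s))) \<le> K0 * ((t - a) powr \<sigma> / \<sigma>)"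
            using t d at tt d' by (intro tail) (auto simp: a_def \<delta>_def)
          also have "\<dots> \<le> K0 * (\<delta>' powr \<sigma> / \<sigma>)"
            using at tt \<sigma> K0 by (intro mult_left_mono divide_right_mono powr_mono2) (auto simp: a_def \<delta>_def)
          finally show ?thesis using sm by linarith
        qed
        have n2: "norm (integral {a..t0} (\<lambda>s. TM (t0 - s) (G s))) < e / 3"
        proof -
          have "norm (integral {a..t0} (\<lambda>s. TM (t0 - s) (G s))) \<le> K0 * ((t0 - a) powr \<sigma> / \<sigma>)"
            using t0 d d' by (intro tail) (auto simp: a_def \<delta>_def)
          also have "\<dots> \<le> K0 * (\<delta>' powr \<sigma> / \<sigma>)"
            using d \<sigma> K0 by (intro mult_left_mono divide_right_mono powr_mono2) (auto simp: a_def \<delta>_def)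
          finally show ?thesis using sm by linarith
        qed
        have i1: "(\<lambda>s. TM (t - s) (G s)) integrable_on {0..a}"
          by (rule integrable_subinterval_real[OF int[OF t]]) (use at in auto)
        have i2: "(\<lambda>s. TM (t0 - s) (G s)) integrable_on {0..a}"
          by (rule integrable_subinterval_real[OF int[OF t0]]) (use d in auto)
        have n3: "norm (integral {0..a} (\<lambda>s. TM (t - s) (G s)) - integral {0..a} (\<lambda>s. TM (t0 - s) (G s))) < e / 3"
        proof -
          have "norm (integral {0..a} (\<lambda>s. TM (t - s) (G s) - TM (t0 - s) (G s)))
                \<le> e / (3 * (a + 1)) * Henstock_Kurzweil_Integration.content {0..a}"
          proof (rule has_integral_bound_real[of _ "{}"])
            show "((\<lambda>s. TM (t - s) (G s) - TM (t0 - s) (G s)) has_integral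
                   integral {0..a} (\<lambda>s. TM (t - s) (G s) - TM (t0 - s) (G s))) {0..a}"
              using integrable_diff[OF i1 i2] by (rule integrable_integral)
            fix s assume s: "s \<in> {0..a} - {}"
            have "dist (F (s, t)) (F (s, t0)) < e / (3 * (a + 1))"
              using s t tt by (intro d1') (auto simp: KS_def dist_Pair_Pair dist_real_def)
            then show "norm (TM (t - s) (G s) - TM (t0 - s) (G s)) \<le> e / (3 * (a + 1))"
              by (simp add: F_def dist_norm)
          qed (use e3 in auto)
          also have "\<dots> = e / 3 * (a / (a + 1))"
          proof -
            have "Henstock_Kurzweil_Integration.content {0..a} = a" using d by simp
            then show ?thesis by simp
          qed
          also have "\<dots> < e / 3 * 1"
            using d e by (intro mult_strict_left_mono) auto
          also have "\<dots> = e / 3" by simp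
          finally show ?thesis by (simp add: integral_diff[OF i1 i2])
        qed
        have "dist (C t) (C t0) \<le> norm (integral {0..a} (\<lambda>s. TM (t - s) (G s)) - integral {0..a} (\<lambda>s. TM (t0 - s) (G s)))
              + norm (integral {a..t} (\<lambda>s. TM (t - s) (G s))) + norm (integral {a..t0} (\<lambda>s. TM (t0 - s) (G s)))"
          unfolding sp1 sp2 dist_norm by (rule tri_sum)
        then show "dist (C t) (C t0) < e" using n1 n2 n3 by linarith
      qed
    qed
  qed
qed



lemma geom_lim:
  fixes X :: "nat \<Rightarrow> 'a::metric_space"
  assumes le: "\<And>n. dist (X n) L \<le> C * (1/2)^n"
  shows "X \<longlonglongrightarrow> L"
proof (rule metric_LIMSEQ_I)
  fix e :: real assume e: "e > 0"
  show "\<exists>n0. \<forall>n\<ge>n0. dist (X n) L < e"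
  proof (cases "C > 0")
    case False
    have "dist (X n) L < e" for n
    proof -
      have "C * (1/2)^n \<le> 0" using False by (intro mult_nonpos_nonneg) auto
      then show ?thesis using le[of n] e by linarith
    qed
    then show ?thesis by blast
  next
    case True
    obtain n0 where n0: "(1/2::real)^n0 < e / C" using real_arch_pow_inv[of "e/C" "1/2"] e True by auto
    show ?thesis
    proof (intro exI allI impI)
      fix n assume "n \<ge> n0"
      then have "(1/2::real)^n \<le> (1/2)^n0" by (intro power_decreasing) auto
      then have "(1/2::real)^n < e / C" using n0 by linarith
      then have "C * (1/2)^n < C * (e / C)" using True by (intro mult_strict_left_mono) auto
      then show "dist (X n) L < e" using le[of n] True by simp
    qed
  qed
qed

lemma ntri:
  fixes a b c :: "'a::real_normed_vector"
  shows "norm (a - c) \<le> norm (a - b) + norm (b - c)"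
proof -
  have "a - c = (a - b) + (b - c)" by simp
  then show ?thesis by (metis norm_triangle_ineq)
qed

lemma ntri2:
  fixes a b c :: "'a::real_normed_vector"
  shows "norm (a - c) \<le> norm (a - b) + norm (c - b)"
  using ntri[where a=a and b=b and c=c] by (simp add: norm_minus_commute)

lemma cont_ray:
  fixes f :: "real \<Rightarrow> 'a::topological_space"
  assumes "\<And>T. T \<ge> 0 \<Longrightarrow> continuous_on {0..T} f"
  shows "continuous_on {0..} f"
  unfolding continuous_on_def
proof
  fix x :: real assume x: "x \<in> {0..}"
  have "(f \<longlongrightarrow> f x) (at x within {0..x+1})"
    using assms[of "x+1"] x unfolding continuous_on_def by auto
  moreover have "at x within {0..} = at x within {0..x+1}"
    by (rule at_within_nhd[of x "{..<x+1}"]) auto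
  ultimately show "(f \<longlongrightarrow> f x) (at x within {0..})" by simp
qed

lemma R_facts:
  fixes K N F0 :: real
  assumes K: "K > 0" and N: "N > 0" and F0: "F0 \<ge> 0" and z: "4 * K * N * F0 \<le> 1"
  defines "R \<equiv> F0 * chiX (4 * K * N * F0)"
  shows "R \<ge> 0" "F0 + N * K * R^2 \<le> R" "2 * K * N * R \<le> 1"
proof -
  have "R \<ge> 0 \<and> F0 + N * K * R^2 \<le> R \<and> 2 * K * N * R \<le> 1"
  proof (cases "F0 = 0")
    case True
    then show ?thesis by (simp add: R_def chiX_def)
  next
    case False
    then have F0p: "F0 > 0" using F0 by simp
    define z where "z = 4 * K * N * F0"
    have zp: "z > 0" using K N F0p by (simp add: z_def)
    define u where "u = sqrt (1 - z)"
    have u: "u \<ge> 0" "u < 1" "u^2 = 1 - z" using zp z by (auto simp: u_def z_def)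
    have chi: "chiX z = (1 - u) / (z / 2)" using zp by (simp add: chiX_def u_def)
    have zu: "z = (1 - u) * (1 + u)" using u by (simp add: algebra_simps power2_eq_square)
    have ne: "1 - u \<noteq> 0" "1 + u \<noteq> 0" using u by auto
    have "R = F0 * chiX z" by (simp add: R_def z_def)
    also have "\<dots> = F0 * ((1 - u) / ((1 - u) * (1 + u) / 2))" by (simp add: chi zu[symmetric])
    also have "(1 - u) / ((1 - u) * (1 + u) / 2) = ((1 - u) * 2) / ((1 - u) * (1 + u))"
      by (simp only: divide_divide_eq_right)
    also have "\<dots> = 2 / (1 + u)" using ne(1) by (rule nonzero_mult_divide_mult_cancel_left)
    finally have Rz: "R = F0 * (2 / (1 + u))" .
    have Rz': "R * (1 + u) = 2 * F0" using Rz ne by (simp add: field_simps)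
    have KN': "N * K * (4 * F0) = (1 - u) * (1 + u)" using zu by (simp add: z_def algebra_simps)
    have "N * K * R^2 * (4 * F0) = (N * K * (4 * F0)) * R^2" by (simp add: algebra_simps)
    also have "\<dots> = ((1 - u) * (1 + u)) * R^2" by (simp only: KN')
    also have "\<dots> = (1 - u) * (R * (1 + u)) * R" by (simp add: power2_eq_square algebra_simps)
    also have "\<dots> = (1 - u) * (2 * F0) * R" by (simp only: Rz')
    also have "\<dots> = ((1 - u) * R) * (2 * F0)" by (simp add: algebra_simps)
    finally have "(N * K * R^2 * 2) * (2 * F0) = ((1 - u) * R) * (2 * F0)" by (simp add: algebra_simps)
    then have e1: "N * K * R^2 * 2 = (1 - u) * R"
      using F0p by (subst (asm) mult_right_cancel) auto
    have 1: "F0 + N * K * R^2 \<le> R" using e1 Rz' by (simp add: algebra_simps)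
    have "2 * K * N * R * (2 * F0) = (N * K * (4 * F0)) * R" by (simp add: algebra_simps)
    also have "\<dots> = ((1 - u) * (1 + u)) * R" by (simp only: KN')
    also have "\<dots> = (1 - u) * (R * (1 + u))" by (simp add: algebra_simps)
    also have "\<dots> = (1 - u) * (2 * F0)" by (simp only: Rz')
    finally have "(2 * K * N * R) * (2 * F0) = (1 - u) * (2 * F0)" .
    then have "2 * K * N * R = 1 - u" using F0p by (subst (asm) mult_right_cancel) auto
    then have 2: "2 * K * N * R \<le> 1" using u by simp
    have "R \<ge> 0" using Rz u F0p by simp
    with 1 2 show ?thesis by simp
  qed
  then show "R \<ge> 0" "F0 + N * K * R^2 \<le> R" "2 * K * N * R \<le> 1" by auto
qed


theorem proposition5p12:
  fixes iP :: "'p::banach \<Rightarrow> 'f::banach"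
    and iF :: "'f \<Rightarrow> 'm::banach"
    and A :: "'p \<Rightarrow> 'm"
    and S :: "real \<Rightarrow> 'm \<Rightarrow> 'm"
    and SF :: "real \<Rightarrow> 'f \<Rightarrow> 'f"
    and TM :: "real \<Rightarrow> 'm \<Rightarrow> 'f"
    and \<mu> :: "real \<Rightarrow> real"
    and \<P> :: "'f \<Rightarrow> 'f \<Rightarrow> 'm"
    and \<xi> :: "real \<Rightarrow> 'm"
    and B N K J \<sigma> :: real
    and f0 :: 'f
  assumes emb_P: "dense_embedding iP"
    and emb_F: "dense_embedding iF"
    and A_lin: "linear A"
    and A_graph_norm: "\<exists>c1>0. \<exists>c2>0. \<forall>p. c1 * norm p \<le> norm (iF (iP p)) + norm (A p)
                                        \<and> norm (iF (iP p)) + norm (A p) \<le> c2 * norm p"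
    and gen: "generates (iF \<circ> iP) A S"
    and SF_def: "\<forall>t\<ge>0. \<forall>f. iF (SF t f) = S t (iF f)"
    and SF_cont: "continuous_on (UNIV \<times> {0..}) (\<lambda>(f, t). SF t f)"
    and TM_def: "\<forall>t>0. \<forall>g. iF (TM t g) = S t g"
    and TM_cont: "continuous_on (UNIV \<times> {0<..}) (\<lambda>(g, t). TM t g)"
    and B_nonneg: "B \<ge> 0"
    and N_pos: "N > 0"
    and SF_bound: "\<forall>t\<ge>0. \<forall>f. norm (SF t f) \<le> exp (- B * t) * norm f"
    and TM_bound: "\<forall>t>0. \<forall>g. norm (TM t g) \<le> \<mu> t * exp (- B * t) * norm g"
    and \<mu>_cont: "continuous_on {0<..} \<mu>"
    and \<mu>_pos: "\<forall>t>0. \<mu> t > 0"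
    and \<sigma>: "0 < \<sigma>" "\<sigma> \<le> 1"
    and \<mu>_sing: "\<mu> \<in> O[at_right 0](\<lambda>t. t powr (-(1 - \<sigma>)))"
    and \<mu>_int: "\<forall>t\<ge>0. (\<lambda>s. \<mu> (t - s) * exp (- B * s)) integrable_on {0..t}
                   \<and> integral {0..t} (\<lambda>s. \<mu> (t - s) * exp (- B * s)) \<le> N"
    and P_bil: "bilinear \<P>"
    and K_pos: "K > 0"
    and P_bound: "\<forall>f g. norm (\<P> f g) \<le> K * norm f * norm g"
    and \<xi>_lip: "\<forall>a\<ge>0. \<exists>L. L-lipschitz_on {0..a} \<xi>"
    and J_nonneg: "J \<ge> 0"
    and \<xi>_bound: "\<forall>t\<ge>0. norm (\<xi> t) \<le> J * exp (- 2 * B * t)"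
    and small: "4 * K * N * (norm f0 + N * J) \<le> 1"
  shows "\<exists>\<phi> :: real \<Rightarrow> 'f.
           continuous_on {0..} \<phi> \<and>
           (\<forall>t\<ge>0. ((\<lambda>s. TM (t - s) (\<P> (\<phi> s) (\<phi> s) + \<xi> s)) has_integral (\<phi> t - SF t f0)) {0..t}) \<and>
           (\<forall>t\<ge>0. norm (\<phi> t) \<le> (norm f0 + N * J) * chiX (4 * K * N * (norm f0 + N * J)) * exp (- B * t))"
proof -
  have iF_lin: "linear iF" using emb_F unfolding dense_embedding_def by (auto intro: bounded_linear.linear)
  have iF_inj: "inj iF" using emb_F unfolding dense_embedding_def by auto
  have S_lin: "linear (S r)" if "r \<ge> 0" for r
    using gen that unfolding generates_def strongly_continuous_semigroup_def
    by (auto intro: bounded_linear.linear)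
  have TM_diff: "TM r (a - b) = TM r a - TM r b" if r: "r > 0" for r a b
  proof -
    have "iF (TM r (a - b)) = S r (a - b)" using TM_def r by auto
    also have "\<dots> = S r a - S r b" using S_lin[of r] r by (simp add: linear_diff)
    also have "\<dots> = iF (TM r a) - iF (TM r b)" using TM_def r by auto
    also have "\<dots> = iF (TM r a - TM r b)" using iF_lin by (simp add: linear_diff)
    finally show ?thesis using iF_inj by (auto dest: injD)
  qed
  obtain r0 M\<mu> where r0: "r0 > 0" and M\<mu>: "M\<mu> > 0"
    and \<mu>le: "\<And>r. 0 < r \<Longrightarrow> r \<le> r0 \<Longrightarrow> \<mu> r \<le> M\<mu> * r powr (\<sigma> - 1)"
  proof -
    obtain c where c: "c > 0" and ev: "eventually (\<lambda>x. norm (\<mu> x) \<le> c * norm (x powr (-(1 - \<sigma>)))) (at_right 0)"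
      using \<mu>_sing unfolding bigo_def by auto
    obtain b where b: "b > 0" and bb: "\<And>y. y > 0 \<Longrightarrow> y < b \<Longrightarrow> norm (\<mu> y) \<le> c * norm (y powr (-(1 - \<sigma>)))"
      using ev unfolding eventually_at_right_field by auto
    show ?thesis
    proof (rule that[of "b/2" c])
      show "b/2 > 0" "c > 0" using b c by auto
      fix r :: real assume r: "0 < r" "r \<le> b/2"
      have "\<mu> r \<le> norm (\<mu> r)" by simp
      also have "\<dots> \<le> c * norm (r powr (-(1 - \<sigma>)))" using r b by (intro bb) auto
      also have "\<dots> = c * r powr (\<sigma> - 1)" by simp
      finally show "\<mu> r \<le> c * r powr (\<sigma> - 1)" .
    qed
  qed
  have TMb: "norm (TM r g) \<le> M\<mu> * r powr (\<sigma> - 1) * norm g" if r: "0 < r" "r \<le> r0" for r g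
  proof -
    have "norm (TM r g) \<le> \<mu> r * exp (- B * r) * norm g" using TM_bound r by auto
    also have "\<dots> \<le> \<mu> r * 1 * norm g"
      using r B_nonneg \<mu>_pos by (intro mult_right_mono mult_left_mono) auto
    also have "\<dots> \<le> M\<mu> * r powr (\<sigma> - 1) * norm g" using \<mu>le[OF r] by (simp add: mult_right_mono)
    finally show ?thesis .
  qed
  have \<xi>c: "continuous_on {0..T} \<xi>" for T
  proof (cases "T \<ge> 0")
    case True
    then obtain L where "L-lipschitz_on {0..T} \<xi>" using \<xi>_lip by auto
    then show ?thesis by (rule lipschitz_on_continuous_on)
  next
    case False
    then show ?thesis by simp
  qed
  have Pbb: "bounded_bilinear \<P>"
  proof
    fix a a' b b' :: 'f and r :: real
    show "\<P> (a + a') b = \<P> a b + \<P> a' b" by (rule bilinear_ladd[OF P_bil])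
    show "\<P> a (b + b') = \<P> a b + \<P> a b'" by (rule bilinear_radd[OF P_bil])
    show "\<P> (r *\<^sub>R a) b = r *\<^sub>R \<P> a b" by (rule bilinear_lmul[OF P_bil])
    show "\<P> a (r *\<^sub>R b) = r *\<^sub>R \<P> a b" by (rule bilinear_rmul[OF P_bil])
    show "\<exists>K. \<forall>a b. norm (\<P> a b) \<le> norm a * norm b * K"
      using P_bound by (intro exI[of _ K]) (auto simp: mult_ac)
  qed
  define F0 where "F0 = norm f0 + N * J"
  have F0: "F0 \<ge> 0" using N_pos J_nonneg by (simp add: F0_def)
  define R where "R = F0 * chiX (4 * K * N * F0)"
  have R: "R \<ge> 0" "F0 + N * K * R^2 \<le> R" "2 * K * N * R \<le> 1"
    using R_facts[OF K_pos N_pos F0 small[folded F0_def]] unfolding R_def by auto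
  define Q where "Q \<phi> s = \<P> (\<phi> s) (\<phi> s) + \<xi> s" for \<phi> :: "real \<Rightarrow> 'f" and s
  define \<Phi> where "\<Phi> \<phi> t = SF t f0 + integral {0..t} (\<lambda>s. TM (t - s) (Q \<phi> s))" for \<phi> t
  define Good where "Good \<phi> \<longleftrightarrow> (\<forall>T. continuous_on {0..T} \<phi>) \<and> (\<forall>t\<ge>0. norm (\<phi> t) \<le> R * exp (- B * t))"
    for \<phi> :: "real \<Rightarrow> 'f"
  have expid: "exp (- B * (t - s)) * exp (- 2 * B * s) = exp (- B * t) * exp (- B * s)" for t s
    by (simp add: mult_exp_exp algebra_simps)
  have SFc: "continuous_on {0..T} (\<lambda>t. SF t f0)" for T
  proof -
    have "continuous_on {0..T} ((\<lambda>(f, t). SF t f) \<circ> (\<lambda>t. (f0, t)))"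
      by (rule continuous_on_compose) (auto intro!: continuous_intros continuous_on_subset[OF SF_cont])
    then show ?thesis by (simp add: o_def)
  qed
  have Qc: "continuous_on {0..T} (Q \<phi>)" if "Good \<phi>" for \<phi> T
    unfolding Q_def using that \<xi>c[of T] unfolding Good_def
    by (intro continuous_intros bounded_bilinear.continuous_on[OF Pbb]) auto
  have Qb: "norm (Q \<phi> s) \<le> (K * R^2 + J) * exp (- 2 * B * s)" if "Good \<phi>" "s \<ge> 0" for \<phi> s
  proof -
    have ph: "norm (\<phi> s) \<le> R * exp (- B * s)" using that unfolding Good_def by auto
    have "norm (Q \<phi> s) \<le> K * norm (\<phi> s) * norm (\<phi> s) + J * exp (- 2 * B * s)"
      unfolding Q_def using P_bound \<xi>_bound that(2) by (intro norm_triangle_le add_mono) auto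
    also have "K * norm (\<phi> s) * norm (\<phi> s) \<le> K * (R * exp (- B * s)) * (R * exp (- B * s))"
      using ph K_pos R(1) by (intro mult_mono mult_left_mono) auto
    also have "K * (R * exp (- B * s)) * (R * exp (- B * s)) = K * R^2 * exp (- 2 * B * s)"
      by (simp add: power2_eq_square mult_exp_exp algebra_simps)
    finally show ?thesis by (simp add: algebra_simps)
  qed
  have Qb1: "norm (Q \<phi> s) \<le> K * R^2 + J" if "Good \<phi>" "s \<ge> 0" for \<phi> s
  proof -
    have "(K * R^2 + J) * exp (- 2 * B * s) \<le> (K * R^2 + J) * 1"
      using that B_nonneg K_pos J_nonneg by (intro mult_left_mono) auto
    then show ?thesis using Qb[OF that] by simp
  qed
  have STEP: "Good (\<Phi> \<phi>) \<and> (\<forall>t\<ge>0. ((\<lambda>s. TM (t - s) (Q \<phi> s)) has_integral (\<Phi> \<phi> t - SF t f0)) {0..t})"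
    if G: "Good \<phi>" for \<phi>
  proof -
    have int: "(\<lambda>s. TM (t - s) (Q \<phi> s)) integrable_on {0..t}" if "t \<ge> 0" for t
      by (rule conv_integrable(1)[OF TM_cont TMb \<sigma>(1) r0 less_imp_le[OF M\<mu>] that Qc[OF G]])
         (use Qb1[OF G] in auto)
    have cont: "continuous_on {0..T} (\<Phi> \<phi>)" for T
    proof (cases "T \<ge> 0")
      case True
      show ?thesis unfolding \<Phi>_def
        by (intro continuous_on_add SFc conv_cont[OF TM_cont TMb \<sigma>(1) r0 less_imp_le[OF M\<mu>] True Qc[OF G]])
           (use Qb1[OF G] in auto)
    qed simp
    have bnd: "norm (\<Phi> \<phi> t) \<le> R * exp (- B * t)" if t: "t \<ge> 0" for t
    proof -
      have mi: "(\<lambda>s. \<mu> (t - s) * exp (- B * s)) integrable_on {0..t}"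
        and mle: "integral {0..t} (\<lambda>s. \<mu> (t - s) * exp (- B * s)) \<le> N" using \<mu>_int t by auto
      have "norm (integral {0..t} (\<lambda>s. TM (t - s) (Q \<phi> s)))
            \<le> integral {0..t} (\<lambda>s. ((K * R^2 + J) * exp (- B * t)) * (\<mu> (t - s) * exp (- B * s)))"
      proof (rule norm_int_bound_spike[OF int[OF t]])
        show "(\<lambda>s. ((K * R^2 + J) * exp (- B * t)) * (\<mu> (t - s) * exp (- B * s))) integrable_on {0..t}"
          using mi by (rule integrable_on_mult_right)
        fix s assume s: "0 \<le> s" "s < t"
        have "norm (TM (t - s) (Q \<phi> s)) \<le> \<mu> (t - s) * exp (- B * (t - s)) * norm (Q \<phi> s)"
          using TM_bound s by auto
        also have "\<dots> \<le> \<mu> (t - s) * exp (- B * (t - s)) * ((K * R^2 + J) * exp (- 2 * B * s))"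
        proof (rule mult_left_mono)
          show "norm (Q \<phi> s) \<le> (K * R^2 + J) * exp (- 2 * B * s)" using Qb[OF G, of s] s by simp
          have "\<mu> (t - s) > 0" using \<mu>_pos s by simp
          then show "0 \<le> \<mu> (t - s) * exp (- B * (t - s))" by simp
        qed
        also have "\<dots> = ((K * R^2 + J) * exp (- B * t)) * (\<mu> (t - s) * exp (- B * s))"
          using expid[of t s] by (simp add: algebra_simps)
        finally show "norm (TM (t - s) (Q \<phi> s)) \<le> ((K * R^2 + J) * exp (- B * t)) * (\<mu> (t - s) * exp (- B * s))" .
      qed
      also have "\<dots> = ((K * R^2 + J) * exp (- B * t)) * integral {0..t} (\<lambda>s. \<mu> (t - s) * exp (- B * s))"
        by simp
      also have "\<dots> \<le> ((K * R^2 + J) * exp (- B * t)) * N"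
        using mle K_pos J_nonneg by (intro mult_left_mono) auto
      finally have I: "norm (integral {0..t} (\<lambda>s. TM (t - s) (Q \<phi> s))) \<le> (K * R^2 + J) * N * exp (- B * t)"
        by (simp add: mult_ac)
      have "norm (\<Phi> \<phi> t) \<le> norm (SF t f0) + norm (integral {0..t} (\<lambda>s. TM (t - s) (Q \<phi> s)))"
        unfolding \<Phi>_def by (rule norm_triangle_ineq)
      also have "\<dots> \<le> exp (- B * t) * norm f0 + (K * R^2 + J) * N * exp (- B * t)"
        using SF_bound t I by (intro add_mono) auto
      also have "\<dots> = (F0 + N * K * R^2) * exp (- B * t)" by (simp add: F0_def algebra_simps)
      also have "\<dots> \<le> R * exp (- B * t)" using R by (intro mult_right_mono) auto
      finally show ?thesis .
    qed
    show ?thesis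
    proof (intro conjI allI impI)
      show "Good (\<Phi> \<phi>)" unfolding Good_def using cont bnd by auto
      fix t :: real assume "t \<ge> 0"
      then show "((\<lambda>s. TM (t - s) (Q \<phi> s)) has_integral (\<Phi> \<phi> t - SF t f0)) {0..t}"
        using int[of t] by (simp add: \<Phi>_def has_integral_integral)
    qed
  qed
  obtain \<delta>0 where d0: "0 < \<delta>0" "\<delta>0 \<le> r0" and d0s: "M\<mu> * (\<delta>0 powr \<sigma> / \<sigma>) < N / 4"
    using small_delta[of "N/4" M\<mu> \<sigma> r0] N_pos M\<mu> \<sigma>(1) r0 by auto
  define lam where "lam = ln 4 / \<delta>0"
  have lam: "lam \<ge> 0" using d0 by (simp add: lam_def)
  have lamd: "exp (- lam * \<delta>0) = 1 / 4" using d0 by (simp add: lam_def exp_minus)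
  define w where "w t = exp ((lam - B) * t)" for t
  have wpos: "w t > 0" for t by (simp add: w_def)
  have CONTR: "norm (\<Phi> \<phi> t - \<Phi> \<psi> t) \<le> D / 2 * w t"
    if G1: "Good \<phi>" and G2: "Good \<psi>" and D: "D \<ge> 0" and dle: "\<And>s. s \<ge> 0 \<Longrightarrow> norm (\<phi> s - \<psi> s) \<le> D * w s"
      and t: "t \<ge> 0" for \<phi> \<psi> D t
  proof -
    have i1: "(\<lambda>s. TM (t - s) (Q \<phi> s)) integrable_on {0..t}" using STEP[OF G1] t by blast
    have i2: "(\<lambda>s. TM (t - s) (Q \<psi> s)) integrable_on {0..t}" using STEP[OF G2] t by blast
    have eq: "\<Phi> \<phi> t - \<Phi> \<psi> t = integral {0..t} (\<lambda>s. TM (t - s) (Q \<phi> s) - TM (t - s) (Q \<psi> s))"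
      by (simp add: \<Phi>_def integral_diff[OF i1 i2])
    define ind where "ind s = (if s \<in> {t - \<delta>0..t} then (t - s) powr (\<sigma> - 1) else 0)" for s
    define c where "c = 2 * K * R * D * w t"
    have c: "c \<ge> 0" using K_pos R D wpos[of t] by (simp add: c_def)
    define h where "h s = c * ((1/4) * (\<mu> (t - s) * exp (- B * s)) + M\<mu> * ind s)" for s
    have mi: "(\<lambda>s. \<mu> (t - s) * exp (- B * s)) integrable_on {0..t}"
      and mle: "integral {0..t} (\<lambda>s. \<mu> (t - s) * exp (- B * s)) \<le> N" using \<mu>_int t by auto
    have sub: "{t - \<delta>0..t} \<inter> {0..t} = {max 0 (t - \<delta>0)..t}" by auto
    have indi: "(ind has_integral ((t - max 0 (t - \<delta>0)) powr \<sigma> / \<sigma>)) {0..t}"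
      unfolding ind_def has_integral_restrict_Int sub using t d0 by (intro powr_int \<sigma>(1)) auto
    have indle: "(t - max 0 (t - \<delta>0)) powr \<sigma> / \<sigma> \<le> \<delta>0 powr \<sigma> / \<sigma>"
      using t d0 \<sigma>(1) by (intro divide_right_mono powr_mono2) auto
    have hint: "(h has_integral c * ((1/4) * integral {0..t} (\<lambda>s. \<mu> (t - s) * exp (- B * s))
                   + M\<mu> * ((t - max 0 (t - \<delta>0)) powr \<sigma> / \<sigma>))) {0..t}"
      unfolding h_def
      by (intro has_integral_mult_right has_integral_add indi integrable_integral mi)
    have hle: "c * ((1/4) * integral {0..t} (\<lambda>s. \<mu> (t - s) * exp (- B * s))
                   + M\<mu> * ((t - max 0 (t - \<delta>0)) powr \<sigma> / \<sigma>)) \<le> c * (N / 2)"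
    proof (rule mult_left_mono[OF _ c])
      have "M\<mu> * ((t - max 0 (t - \<delta>0)) powr \<sigma> / \<sigma>) \<le> M\<mu> * (\<delta>0 powr \<sigma> / \<sigma>)"
        using indle M\<mu> by (intro mult_left_mono) auto
      then show "(1/4) * integral {0..t} (\<lambda>s. \<mu> (t - s) * exp (- B * s))
                   + M\<mu> * ((t - max 0 (t - \<delta>0)) powr \<sigma> / \<sigma>) \<le> N / 2"
        using mle d0s by linarith
    qed
    have pw: "\<mu> (t - s) * exp (- B * s) * exp (- lam * (t - s)) \<le> (1/4) * (\<mu> (t - s) * exp (- B * s)) + M\<mu> * ind s"
      if s: "0 \<le> s" "s < t" for s
    proof -
      have mp: "\<mu> (t - s) > 0" using \<mu>_pos s by simp
      have indnn: "ind s \<ge> 0" by (simp add: ind_def)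
      show ?thesis
      proof (cases "s \<le> t - \<delta>0")
        case True
        have "exp (- lam * (t - s)) \<le> exp (- lam * \<delta>0)" using True lam by (simp add: mult_left_mono)
        then have "exp (- lam * (t - s)) \<le> 1/4" using lamd by linarith
        then have "\<mu> (t - s) * exp (- B * s) * exp (- lam * (t - s)) \<le> \<mu> (t - s) * exp (- B * s) * (1/4)"
          using mp by (intro mult_left_mono) auto
        moreover have "M\<mu> * ind s \<ge> 0" using M\<mu> indnn by simp
        ultimately show ?thesis by simp
      next
        case False
        then have ind: "ind s = (t - s) powr (\<sigma> - 1)" using s by (simp add: ind_def)
        have "\<mu> (t - s) * exp (- B * s) * exp (- lam * (t - s)) \<le> \<mu> (t - s) * 1 * 1"
          using mp s B_nonneg lam by (intro mult_mono) auto
        also have "\<dots> \<le> M\<mu> * ind s" unfolding ind using \<mu>le[of "t - s"] s False d0 by simp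
        moreover have "0 \<le> (1/4) * (\<mu> (t - s) * exp (- B * s))" using mp by simp
        ultimately show ?thesis by linarith
      qed
    qed
    have "norm (integral {0..t} (\<lambda>s. TM (t - s) (Q \<phi> s) - TM (t - s) (Q \<psi> s))) \<le> integral {0..t} h"
    proof (rule norm_int_bound_spike[OF integrable_diff[OF i1 i2]])
      show "h integrable_on {0..t}" using hint by blast
      fix s assume s: "0 \<le> s" "s < t"
      have a: "norm (\<phi> s) \<le> R * exp (- B * s)" and b: "norm (\<psi> s) \<le> R * exp (- B * s)"
        using G1 G2 s unfolding Good_def by auto
      have ab: "norm (\<phi> s - \<psi> s) \<le> D * w s" using dle s by simp
      have "Q \<phi> s - Q \<psi> s = \<P> (\<phi> s) (\<phi> s - \<psi> s) + \<P> (\<phi> s - \<psi> s) (\<psi> s)"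
        by (simp add: Q_def bilinear_rsub[OF P_bil] bilinear_lsub[OF P_bil])
      then have "norm (Q \<phi> s - Q \<psi> s) \<le> K * norm (\<phi> s) * norm (\<phi> s - \<psi> s) + K * norm (\<phi> s - \<psi> s) * norm (\<psi> s)"
        using P_bound by (metis add_mono norm_triangle_le)
      also have "\<dots> \<le> K * (R * exp (- B * s)) * (D * w s) + K * (D * w s) * (R * exp (- B * s))"
        using a b ab K_pos R(1) D wpos[of s] by (intro add_mono mult_mono mult_left_mono) auto
      also have "\<dots> = 2 * K * R * D * (exp (- B * s) * w s)" by (simp add: algebra_simps)
      finally have Qd: "norm (Q \<phi> s - Q \<psi> s) \<le> 2 * K * R * D * (exp (- B * s) * w s)" .
      have "norm (TM (t - s) (Q \<phi> s) - TM (t - s) (Q \<psi> s)) = norm (TM (t - s) (Q \<phi> s - Q \<psi> s))"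
        using s by (simp add: TM_diff)
      also have "\<dots> \<le> \<mu> (t - s) * exp (- B * (t - s)) * norm (Q \<phi> s - Q \<psi> s)"
        using TM_bound s by auto
      also have "\<dots> \<le> \<mu> (t - s) * exp (- B * (t - s)) * (2 * K * R * D * (exp (- B * s) * w s))"
      proof (rule mult_left_mono[OF Qd])
        have "\<mu> (t - s) > 0" using \<mu>_pos s by simp
        then show "0 \<le> \<mu> (t - s) * exp (- B * (t - s))" by simp
      qed
      also have "\<dots> = c * (\<mu> (t - s) * exp (- B * s) * exp (- lam * (t - s)))"
        unfolding c_def w_def by (simp add: mult_exp_exp algebra_simps)
      also have "\<dots> \<le> h s" unfolding h_def using pw[OF s] c by (intro mult_left_mono) auto
      finally show "norm (TM (t - s) (Q \<phi> s) - TM (t - s) (Q \<psi> s)) \<le> h s" .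
    qed
    also have "\<dots> \<le> c * (N / 2)" using integral_unique[OF hint] hle by simp
    also have "\<dots> = (K * N * R) * (D * w t)" by (simp add: c_def algebra_simps)
    also have "\<dots> \<le> (1/2) * (D * w t)"
      using R(3) D wpos[of t] by (intro mult_right_mono) (auto simp: algebra_simps)
    finally show ?thesis using eq by (simp add: algebra_simps)
  qed
  define \<phi>s where "\<phi>s n = (\<Phi> ^^ n) (\<lambda>_. 0)" for n
  have \<phi>s0: "\<phi>s 0 = (\<lambda>_. 0)" by (simp add: \<phi>s_def)
  have \<phi>sS: "\<phi>s (Suc n) = \<Phi> (\<phi>s n)" for n by (simp add: \<phi>s_def)
  have good: "Good (\<phi>s n)" for n
  proof (induction n)
    case 0
    show ?case unfolding \<phi>s0 Good_def using R(1) by auto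
  next
    case (Suc n)
    then show ?case unfolding \<phi>sS using STEP by blast
  qed
  have ew: "exp (- B * t) \<le> w t" if "t \<ge> 0" for t
    unfolding w_def using that lam by (simp add: mult_right_mono algebra_simps)
  have diff1: "norm (\<phi>s (Suc n) t - \<phi>s n t) \<le> R * (1/2)^n * w t" if t: "t \<ge> 0" for n t
    using t
  proof (induction n arbitrary: t)
    case 0
    have "norm (\<phi>s 1 t) \<le> R * exp (- B * t)" using good[of 1] 0 unfolding Good_def by auto
    also have "\<dots> \<le> R * w t" using ew[OF 0] R(1) by (intro mult_left_mono) auto
    finally show ?case by (simp add: \<phi>s0)
  next
    case (Suc n)
    have "norm (\<Phi> (\<phi>s (Suc n)) t - \<Phi> (\<phi>s n) t) \<le> (R * (1/2)^n) / 2 * w t"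
      by (rule CONTR[OF good good]) (use R(1) Suc in auto)
    then show ?case by (simp add: \<phi>sS[of "Suc n"] \<phi>sS[of n] mult_ac)
  qed
  have cb: "norm (\<phi>s (n + k) t - \<phi>s n t) \<le> 2 * R * ((1/2)^n - (1/2)^(n + k)) * w t" if t: "t \<ge> 0" for n k t
  proof (induction k)
    case 0
    then show ?case by simp
  next
    case (Suc k)
    have "norm (\<phi>s (n + Suc k) t - \<phi>s n t)
          \<le> norm (\<phi>s (Suc (n + k)) t - \<phi>s (n + k) t) + norm (\<phi>s (n + k) t - \<phi>s n t)"
      using ntri[where a="\<phi>s (Suc (n + k)) t" and b="\<phi>s (n + k) t" and c="\<phi>s n t"] by simp
    also have "\<dots> \<le> R * (1/2)^(n + k) * w t + 2 * R * ((1/2)^n - (1/2)^(n + k)) * w t"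
      using diff1[OF t, of "n + k"] Suc by (intro add_mono) auto
    also have "\<dots> = 2 * R * ((1/2)^n - (1/2)^(n + Suc k)) * w t" by (simp add: algebra_simps)
    finally show ?case .
  qed
  have cb2: "norm (\<phi>s m t - \<phi>s n t) \<le> 2 * R * (1/2)^n * w t" if t: "t \<ge> 0" and mn: "m \<ge> n" for m n t
  proof -
    obtain k where m: "m = n + k" using mn le_Suc_ex by blast
    have "2 * R * ((1/2)^n - (1/2)^(n + k)) * w t \<le> 2 * R * (1/2)^n * w t"
      using R(1) wpos[of t] by (intro mult_right_mono mult_left_mono) auto
    then show ?thesis using cb[OF t, of n k] m by simp
  qed
  define \<phi> where "\<phi> t = lim (\<lambda>n. \<phi>s n t)" for t
  have conv: "(\<lambda>n. \<phi>s n t) \<longlonglongrightarrow> \<phi> t" if t: "t \<ge> 0" for t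
  proof -
    have "Cauchy (\<lambda>n. \<phi>s n t)"
    proof (rule metric_CauchyI)
      fix e :: real assume e: "e > 0"
      define C where "C = 4 * R * w t + 1"
      have "4 * R * w t \<ge> 0" using R(1) wpos[of t] by simp
      then have C: "C > 0" by (simp add: C_def)
      obtain M where M: "(1/2::real)^M < e / C" using real_arch_pow_inv[of "e / C" "1/2"] e C by auto
      show "\<exists>M. \<forall>m\<ge>M. \<forall>n\<ge>M. dist (\<phi>s m t) (\<phi>s n t) < e"
      proof (intro exI allI impI)
        fix m n assume mM: "m \<ge> M" and nM: "n \<ge> M"
        have "dist (\<phi>s m t) (\<phi>s n t) \<le> norm (\<phi>s m t - \<phi>s M t) + norm (\<phi>s n t - \<phi>s M t)"
          unfolding dist_norm by (rule ntri2)
        also have "\<dots> \<le> 2 * R * (1/2)^M * w t + 2 * R * (1/2)^M * w t"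
          using cb2[OF t mM] cb2[OF t nM] by (intro add_mono)
        also have "\<dots> = (4 * R * w t) * (1/2)^M" by (simp add: algebra_simps)
        also have "\<dots> \<le> C * (1/2)^M" by (intro mult_right_mono) (auto simp: C_def)
        also have "\<dots> < C * (e / C)" using M C by (intro mult_strict_left_mono) auto
        also have "\<dots> = e" using C by simp
        finally show "dist (\<phi>s m t) (\<phi>s n t) < e" .
      qed
    qed
    then show ?thesis unfolding \<phi>_def by (simp add: Cauchy_convergent_iff convergent_LIMSEQ_iff)
  qed
  have lb: "norm (\<phi> t - \<phi>s n t) \<le> 2 * R * (1/2)^n * w t" if t: "t \<ge> 0" for n t
  proof (rule LIMSEQ_le_const2)
    show "(\<lambda>m. norm (\<phi>s m t - \<phi>s n t)) \<longlonglongrightarrow> norm (\<phi> t - \<phi>s n t)"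
      by (intro tendsto_norm tendsto_diff conv[OF t] tendsto_const)
    show "\<exists>N. \<forall>m\<ge>N. norm (\<phi>s m t - \<phi>s n t) \<le> 2 * R * (1/2)^n * w t"
      using cb2[OF t] by blast
  qed
  have Gphi: "Good \<phi>"
    unfolding Good_def
  proof (intro conjI allI impI)
    fix t :: real assume t: "t \<ge> 0"
    show "norm (\<phi> t) \<le> R * exp (- B * t)"
    proof (rule LIMSEQ_le_const2)
      show "(\<lambda>m. norm (\<phi>s m t)) \<longlonglongrightarrow> norm (\<phi> t)" by (intro tendsto_norm conv[OF t])
      show "\<exists>N. \<forall>m\<ge>N. norm (\<phi>s m t) \<le> R * exp (- B * t)" using good t unfolding Good_def by blast
    qed
  next
    fix T :: real
    show "continuous_on {0..T} \<phi>"
    proof (rule uniform_limit_theorem[where F=sequentially and f=\<phi>s])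
      show "\<forall>\<^sub>F n in sequentially. continuous_on {0..T} (\<phi>s n)" using good unfolding Good_def by auto
      show "\<not> trivial_limit sequentially" by simp
      show "uniform_limit {0..T} \<phi>s \<phi> sequentially"
        unfolding uniform_limit_iff
      proof (intro allI impI)
        fix e :: real assume e: "e > 0"
        define C where "C = 2 * R * exp (lam * \<bar>T\<bar>) + 1"
        have "2 * R * exp (lam * \<bar>T\<bar>) \<ge> 0" using R(1) by simp
        then have C: "C > 0" by (simp add: C_def)
        obtain M where M: "(1/2::real)^M < e / C" using real_arch_pow_inv[of "e / C" "1/2"] e C by auto
        show "\<forall>\<^sub>F n in sequentially. \<forall>x\<in>{0..T}. dist (\<phi>s n x) (\<phi> x) < e"
          unfolding eventually_sequentially
        proof (intro exI allI impI ballI)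
          fix n x assume nM: "M \<le> n" and x: "x \<in> {0..T}"
          have wx: "w x \<le> exp (lam * \<bar>T\<bar>)"
          proof -
            have "lam * x \<le> lam * \<bar>T\<bar>" using x lam by (intro mult_left_mono) auto
            moreover have "B * x \<ge> 0" using B_nonneg x by simp
            moreover have "(lam - B) * x = lam * x - B * x" by (simp add: left_diff_distrib)
            ultimately have "(lam - B) * x \<le> lam * \<bar>T\<bar>" by linarith
            then show ?thesis unfolding w_def by simp
          qed
          have "dist (\<phi>s n x) (\<phi> x) \<le> 2 * R * (1/2)^n * w x"
            using lb[of x n] x by (simp add: dist_norm norm_minus_commute)
          also have "\<dots> \<le> 2 * R * (1/2)^n * exp (lam * \<bar>T\<bar>)"
            using wx R(1) by (intro mult_left_mono) auto
          also have "\<dots> \<le> C * (1/2)^n" by (simp add: C_def algebra_simps)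
          also have "\<dots> \<le> C * (1/2)^M" using nM C by (intro mult_left_mono power_decreasing) auto
          also have "\<dots> < C * (e / C)" using M C by (intro mult_strict_left_mono) auto
          also have "\<dots> = e" using C by simp
          finally show "dist (\<phi>s n x) (\<phi> x) < e" .
        qed
      qed
    qed
  qed
  have fix\<Phi>: "\<Phi> \<phi> t = \<phi> t" if t: "t \<ge> 0" for t
  proof -
    have "(\<lambda>n. \<phi>s (Suc n) t) \<longlonglongrightarrow> \<Phi> \<phi> t"
    proof (rule geom_lim)
      fix n
      have "norm (\<Phi> \<phi> t - \<Phi> (\<phi>s n) t) \<le> (2 * R * (1/2)^n) / 2 * w t"
        by (rule CONTR[OF Gphi good]) (use R(1) lb t in auto)
      then show "dist (\<phi>s (Suc n) t) (\<Phi> \<phi> t) \<le> (R * w t) * (1/2)^n"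
        by (simp add: \<phi>sS dist_norm norm_minus_commute algebra_simps)
    qed
    moreover have "(\<lambda>n. \<phi>s (Suc n) t) \<longlonglongrightarrow> \<phi> t" using conv[OF t] by (rule LIMSEQ_Suc)
    ultimately show ?thesis by (rule LIMSEQ_unique)
  qed
  show ?thesis
  proof (intro exI conjI allI impI)
    show "continuous_on {0..} \<phi>" using Gphi unfolding Good_def by (intro cont_ray) auto
    fix t :: real assume t: "t \<ge> 0"
    show "((\<lambda>s. TM (t - s) (\<P> (\<phi> s) (\<phi> s) + \<xi> s)) has_integral (\<phi> t - SF t f0)) {0..t}"
      using STEP[OF Gphi] t fix\<Phi>[OF t] unfolding Q_def by auto
  next
    fix t :: real assume t: "t \<ge> 0"
    show "norm (\<phi> t) \<le> (norm f0 + N * J) * chiX (4 * K * N * (norm f0 + N * J)) * exp (- B * t)"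
      using Gphi t unfolding Good_def R_def F0_def by auto
  qed
qed


end
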